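(* Consider an online learner in the smoothed online classification protocol on a measure space $(\mathcal{X},\nu)$ against a $\nu$-dominated adversary, and let $A_t\subset\mathcal{X}$ be the (measurable) mistake set of the learner at time $t$, i.e. the set of $x$ with $h_t(x)\ne c(x)$. If $\nu(A_t)\to0$ almost surely, then $$\lim_{T\to\infty}\frac1T\sum_{t=1}^T\mathbb{1}\{y_t\ne\hat y_t\}=0\quad\text{almost surely}.$$
   Context: Protocol: the adversary fixes $c:\mathcal{X}\to\mathcal{Y}$; at each time $t$ it selects a distribution $\mu_t$ (possibly depending on the history) and draws $x_t\sim\mu_t$; the learner predicts $\hat y_t=h_t(x_t)$ with $h_t$ determined by past data; $y_t=c(x_t)$. $\nu$ uniformly dominates a family $\mathcal{M}$ of distributions if for all $\epsilon>0$ there is $\delta>0$ such that $\nu(A)<\delta\Rightarrow\mu(A)<\epsilon$ for all measurable $A$, $\mu\in\mathcal{M}$; a $\nu$-dominated adversary always selects $\mu_t$ from such a family. *)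

theory Defs
  imports "HOL-Probability.Probability"
begin

definition uniformly_dominates :: "'x measure \<Rightarrow> 'x measure set \<Rightarrow> bool" where
  "uniformly_dominates nu Ms \<longleftrightarrow>
     (\<forall>\<epsilon>::real. \<epsilon> > 0 \<longrightarrow> (\<exists>\<delta>::real. \<delta> > 0 \<and>
        (\<forall>A\<in>sets nu. emeasure nu A < ennreal \<delta> \<longrightarrow> (\<forall>\<mu>\<in>Ms. emeasure \<mu> A < ennreal \<epsilon>))))"

end

theory Submission
  imports Defs "HOL-Probability.Probability"
begin

lemma key_law:
  assumes P: "prob_space M" and sub: "subalgebra M G"
    and X: "X \<in> M \<rightarrow>\<^sub>M N" and K: "K \<in> G \<rightarrow>\<^sub>M prob_algebra N"
    and law: "\<And>C B. C \<in> sets G \<Longrightarrow> B \<in> sets N \<Longrightarrow>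
        measure M (C \<inter> {\<omega> \<in> space M. X \<omega> \<in> B}) = (\<integral>\<omega>. indicator C \<omega> * measure (K \<omega>) B \<partial>M)"
    and f: "f \<in> borel_measurable (G \<Otimes>\<^sub>M N)"
  shows "(\<integral>\<^sup>+\<omega>. f (\<omega>, X \<omega>) \<partial>M) = (\<integral>\<^sup>+\<omega>. (\<integral>\<^sup>+x. f (\<omega>, x) \<partial>K \<omega>) \<partial>M)"
proof -
  interpret prob_space M by fact
  define Mt where "Mt = restr_to_subalg M G"
  have setsMt: "sets Mt = sets G" unfolding Mt_def by (rule sets_restr_to_subalg[OF sub])
  have spMt: "space Mt = space M" unfolding Mt_def by (rule space_restr_to_subalg)
  have spG: "space G = space M" using sub unfolding subalgebra_def by auto
  have setsG: "sets G \<subseteq> sets M" using sub unfolding subalgebra_def by auto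
  have Ksub: "K \<in> G \<rightarrow>\<^sub>M subprob_algebra N" using measurable_prob_algebraD[OF K] .
  have KsubMt: "K \<in> Mt \<rightarrow>\<^sub>M subprob_algebra N" using Ksub by (simp add: measurable_cong_sets[OF setsMt refl])
  have Kw: "\<And>\<omega>. \<omega> \<in> space M \<Longrightarrow> sets (K \<omega>) = sets N \<and> prob_space (K \<omega>)"
    using measurable_space[OF K] spG by (auto simp: space_prob_algebra)
  have idM: "(\<lambda>\<omega>. \<omega>) \<in> M \<rightarrow>\<^sub>M G" using sub unfolding subalgebra_def
    by (intro measurableI) (auto)
  have pairX: "(\<lambda>\<omega>. (\<omega>, X \<omega>)) \<in> M \<rightarrow>\<^sub>M G \<Otimes>\<^sub>M N"
    using idM X by (intro measurable_Pair) auto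
  define Q1 where "Q1 = distr M (G \<Otimes>\<^sub>M N) (\<lambda>\<omega>. (\<omega>, X \<omega>))"
  define L where "L = (\<lambda>\<omega>. distr (K \<omega>) (G \<Otimes>\<^sub>M N) (Pair \<omega>))"
  have Lm: "L \<in> Mt \<rightarrow>\<^sub>M subprob_algebra (G \<Otimes>\<^sub>M N)"
    unfolding L_def
  proof (rule measurable_distr2[OF _ KsubMt])
    show "(\<lambda>(x, y). (x, y)) \<in> Mt \<Otimes>\<^sub>M N \<rightarrow>\<^sub>M G \<Otimes>\<^sub>M N"
      unfolding case_prod_Pair id_def by (rule measurable_ident_sets[OF sets_pair_measure_cong[OF setsMt refl]])
  qed
  define Q2 where "Q2 = Mt \<bind> L"
  have ne: "space Mt \<noteq> {}" using spMt not_empty by simp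
  have sQ1: "sets Q1 = sets (G \<Otimes>\<^sub>M N)" unfolding Q1_def by simp
  have sQ2: "sets Q2 = sets (G \<Otimes>\<^sub>M N)" unfolding Q2_def using sets_bind[OF subprob_measurableD(2)[OF Lm] ] ne
    by (metis Lm sets_bind_measurable)
  have Q: "Q1 = Q2"
  proof (rule measure_eqI_generator_eq[OF Int_stable_pair_measure_generator[of G N], where \<Omega>="space G \<times> space N" and A="\<lambda>i. space G \<times> space N"])
    show "{a \<times> b |a b. a \<in> sets G \<and> b \<in> sets N} \<subseteq> Pow (space G \<times> space N)"
      using sets.sets_into_space by (blast dest: sets.sets_into_space)
    show "sets Q1 = sigma_sets (space G \<times> space N) {a \<times> b |a b. a \<in> sets G \<and> b \<in> sets N}"
      using sQ1 sets_pair_measure by metis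
    show "sets Q2 = sigma_sets (space G \<times> space N) {a \<times> b |a b. a \<in> sets G \<and> b \<in> sets N}"
      using sQ2 sets_pair_measure by metis
    show "range (\<lambda>i. space G \<times> space N) \<subseteq> {a \<times> b |a b. a \<in> sets G \<and> b \<in> sets N}" by blast
    show "(\<Union>i. space G \<times> space N) = space G \<times> space N" by simp
    show "\<And>i. emeasure Q1 (space G \<times> space N) \<noteq> \<infinity>"
      unfolding Q1_def using pairX
      by (simp add: emeasure_distr emeasure_eq_measure)
    fix R assume "R \<in> {a \<times> b |a b. a \<in> sets G \<and> b \<in> sets N}"
    then obtain C B where R: "R = C \<times> B" and C: "C \<in> sets G" and B: "B \<in> sets N" by blast
    have "emeasure Q1 R = emeasure M (C \<inter> {\<omega> \<in> space M. X \<omega> \<in> B})"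
      unfolding Q1_def R using pairX C B
      by (subst emeasure_distr) (auto intro!: arg_cong[where f="emeasure M"])
    also have "\<dots> = ennreal (\<integral>\<omega>. indicator C \<omega> * measure (K \<omega>) B \<partial>M)"
      using law[OF C B] by (simp add: emeasure_eq_measure)
    also have "\<dots> = (\<integral>\<^sup>+\<omega>. ennreal (indicator C \<omega> * measure (K \<omega>) B) \<partial>M)"
    proof (rule nn_integral_eq_integral[symmetric])
      have m: "(\<lambda>\<omega>. indicator C \<omega> * measure (K \<omega>) B) \<in> borel_measurable M"
      proof (rule borel_measurable_times)
        show "indicator C \<in> borel_measurable M" using C setsG by (intro borel_measurable_indicator) auto
        show "(\<lambda>\<omega>. measure (K \<omega>) B) \<in> borel_measurable M"
          by (rule measurable_from_subalg[OF sub measurable_compose[OF K measurable_measure_prob_algebra[OF B]]])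
      qed
      show "integrable M (\<lambda>\<omega>. indicator C \<omega> * measure (K \<omega>) B)"
      proof (rule integrable_const_bound[where B=1])
        show "AE x in M. norm (indicator C x * measure (K x) B) \<le> (1::real)"
          using Kw by (intro AE_I2) (auto simp: indicator_def prob_space.prob_le_1)
      qed (rule m)
    qed (auto simp: indicator_def)
    also have "\<dots> = (\<integral>\<^sup>+\<omega>. indicator C \<omega> * emeasure (K \<omega>) B \<partial>M)"
    proof (intro nn_integral_cong)
      fix \<omega> assume "\<omega> \<in> space M"
      then interpret Kp: prob_space "K \<omega>" using Kw by auto
      show "ennreal (indicator C \<omega> * measure (K \<omega>) B) = indicator C \<omega> * emeasure (K \<omega>) B"
        by (auto simp: indicator_def Kp.emeasure_eq_measure)
    qed
    also have "\<dots> = (\<integral>\<^sup>+\<omega>. indicator C \<omega> * emeasure (K \<omega>) B \<partial>Mt)"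
      unfolding Mt_def
    proof (rule nn_integral_subalgebra2[OF sub, symmetric])
      have "(\<lambda>\<omega>. emeasure (K \<omega>) B) \<in> borel_measurable G"
        using measurable_compose[OF Ksub measurable_emeasure_subprob_algebra[OF B]] .
      then show "(\<lambda>\<omega>. indicator C \<omega> * emeasure (K \<omega>) B) \<in> borel_measurable G"
        using C by (intro borel_measurable_times_ennreal borel_measurable_indicator) auto
    qed
    also have "\<dots> = (\<integral>\<^sup>+\<omega>. emeasure (L \<omega>) R \<partial>Mt)"
    proof (intro nn_integral_cong)
      fix \<omega> assume w: "\<omega> \<in> space Mt"
      then have w': "\<omega> \<in> space G" using spMt spG by simp
      have "Pair \<omega> \<in> K \<omega> \<rightarrow>\<^sub>M G \<Otimes>\<^sub>M N"
        proof (rule measurable_Pair)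
        show "(\<lambda>x. \<omega>) \<in> K \<omega> \<rightarrow>\<^sub>M G" using w' by (rule measurable_const)
        have "sets (K \<omega>) = sets N" using Kw[of \<omega>] spMt w by simp
        then show "(\<lambda>x. x) \<in> K \<omega> \<rightarrow>\<^sub>M N" by (rule measurable_ident_sets)
      qed
      moreover have "Pair \<omega> -` (C \<times> B) \<inter> space (K \<omega>) = (if \<omega> \<in> C then B else {})"
      proof -
        have sp: "space (K \<omega>) = space N" using Kw[of \<omega>] w spMt sets_eq_imp_space_eq by auto
        have "B \<subseteq> space N" using B sets.sets_into_space by auto
        then show ?thesis using sp by auto
      qed
      ultimately show "indicator C \<omega> * emeasure (K \<omega>) B = emeasure (L \<omega>) R"
        unfolding L_def R using C B by (subst emeasure_distr) auto
    qed
    also have "\<dots> = emeasure Q2 R"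
      unfolding Q2_def using C B R by (subst emeasure_bind[OF ne Lm]) auto
    finally show "emeasure Q1 R = emeasure Q2 R" .
  qed
  have "(\<integral>\<^sup>+\<omega>. f (\<omega>, X \<omega>) \<partial>M) = (\<integral>\<^sup>+z. f z \<partial>Q1)"
    unfolding Q1_def using f pairX by (simp add: nn_integral_distr)
  also have "\<dots> = (\<integral>\<^sup>+z. f z \<partial>Q2)" using Q by simp
  also have "\<dots> = (\<integral>\<^sup>+\<omega>. (\<integral>\<^sup>+z. f z \<partial>L \<omega>) \<partial>Mt)"
    unfolding Q2_def using f Lm by (rule nn_integral_bind)
  also have "\<dots> = (\<integral>\<^sup>+\<omega>. (\<integral>\<^sup>+x. f (\<omega>, x) \<partial>K \<omega>) \<partial>Mt)"
  proof (intro nn_integral_cong)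
    fix \<omega> assume w: "\<omega> \<in> space Mt"
    then have w': "\<omega> \<in> space G" using spMt spG by simp
    have "Pair \<omega> \<in> K \<omega> \<rightarrow>\<^sub>M G \<Otimes>\<^sub>M N"
      proof (rule measurable_Pair)
        show "(\<lambda>x. \<omega>) \<in> K \<omega> \<rightarrow>\<^sub>M G" using w' by (rule measurable_const)
        have "sets (K \<omega>) = sets N" using Kw[of \<omega>] spMt w by simp
        then show "(\<lambda>x. x) \<in> K \<omega> \<rightarrow>\<^sub>M N" by (rule measurable_ident_sets)
      qed
    then show "(\<integral>\<^sup>+z. f z \<partial>L \<omega>) = (\<integral>\<^sup>+x. f (\<omega>, x) \<partial>K \<omega>)"
      unfolding L_def using f by (simp add: nn_integral_distr)
  qed
  also have "\<dots> = (\<integral>\<^sup>+\<omega>. (\<integral>\<^sup>+x. f (\<omega>, x) \<partial>K \<omega>) \<partial>M)"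
    unfolding Mt_def
  proof (rule nn_integral_subalgebra2[OF sub])
    show "(\<lambda>\<omega>. \<integral>\<^sup>+ x. f (\<omega>, x) \<partial>K \<omega>) \<in> borel_measurable G"
      using nn_integral_measurable_subprob_algebra2[OF _ Ksub, of "\<lambda>\<omega> x. f (\<omega>, x)"] f by simp
  qed
  finally show ?thesis .
qed

lemma cesaro0:
  fixes a :: "nat \<Rightarrow> real"
  assumes a: "a \<longlonglongrightarrow> 0"
  shows "(\<lambda>T. (\<Sum>t<T. a t) / real T) \<longlonglongrightarrow> 0"
proof (rule LIMSEQ_I)
  fix r :: real assume r: "0 < r"
  from LIMSEQ_D[OF a, of "r/2"] r obtain N where N: "\<And>n. n \<ge> N \<Longrightarrow> norm (a n) < r/2" by auto
  define K where "K = (\<Sum>t<N. \<bar>a t\<bar>)"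
  have K0: "K \<ge> 0" unfolding K_def by (auto intro: sum_nonneg)
  obtain N2 :: nat where N2: "real N2 > 2 * K / r" using reals_Archimedean2 by blast
  show "\<exists>no. \<forall>n\<ge>no. norm ((\<Sum>t<n. a t) / real n - 0) < r"
  proof (intro exI allI impI)
    fix n assume n: "n \<ge> max (Suc N) N2"
    then have nN: "N \<le> n" and n0: "real n > 0" by auto
    have split: "(\<Sum>t<n. a t) = (\<Sum>t<N. a t) + (\<Sum>t\<in>{N..<n}. a t)"
      using nN by (metis atLeast0LessThan sum.atLeastLessThan_concat zero_le)
    have "\<bar>\<Sum>t<n. a t\<bar> \<le> \<bar>\<Sum>t<N. a t\<bar> + \<bar>\<Sum>t\<in>{N..<n}. a t\<bar>" unfolding split by (rule abs_triangle_ineq)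
    also have "\<bar>\<Sum>t<N. a t\<bar> \<le> K" unfolding K_def by (rule sum_abs)
    also have "\<bar>\<Sum>t\<in>{N..<n}. a t\<bar> \<le> (\<Sum>t\<in>{N..<n}. r/2)"
      by (rule order_trans[OF sum_abs sum_mono]) (use N in \<open>auto simp: less_imp_le\<close>)
    also have "\<dots> \<le> real n * (r/2)" using r by auto
    finally have b: "\<bar>\<Sum>t<n. a t\<bar> \<le> K + real n * (r / 2)" by simp
    have "K < real n * (r/2)"
    proof -
      have "real n \<ge> real N2" using n by auto
      then have "real n > 2 * K / r" using N2 by linarith
      then have "real n * r > 2 * K" using r by (simp add: field_simps)
      then show ?thesis by simp
    qed
    with b have "\<bar>\<Sum>t<n. a t\<bar> < real n * r" by linarith
    then show "norm ((\<Sum>t<n. a t) / real n - 0) < r" using n0 by (simp add: field_simps)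
  qed
qed

lemma interp0:
  fixes s :: "nat \<Rightarrow> real"
  assumes lip: "\<And>T m. m \<le> T \<Longrightarrow> \<bar>s T - s m\<bar> \<le> real T - real m"
    and sub: "(\<lambda>n. s ((Suc n)^2) / real ((Suc n)^2)) \<longlonglongrightarrow> 0"
  shows "(\<lambda>T. s T / real T) \<longlonglongrightarrow> 0"
proof (rule LIMSEQ_I)
  fix r :: real assume r: "0 < r"
  from LIMSEQ_D[OF sub, of "r/2"] r obtain N where
    N: "\<And>n. n \<ge> N \<Longrightarrow> \<bar>s ((Suc n)^2) / real ((Suc n)^2)\<bar> < r/2" by auto
  obtain N2 :: nat where N2: "real N2 > 4 / r" using reals_Archimedean2 by blast
  define N3 where "N3 = Suc (max N N2)"
  show "\<exists>no. \<forall>T\<ge>no. norm (s T / real T - 0) < r"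
  proof (intro exI allI impI)
    fix T assume T: "T \<ge> N3^2"
    define k where "k = nat \<lfloor>sqrt (real T)\<rfloor>"
    have sq: "sqrt (real T) \<ge> real N3" using T
      by (metis real_le_rsqrt of_nat_le_iff of_nat_power)
    have k1: "real k \<le> sqrt (real T)" unfolding k_def by simp
    have k2: "sqrt (real T) < real k + 1" unfolding k_def by simp
    have kN3: "k \<ge> N3" using sq unfolding k_def by (metis le_nat_floor)
    then have kpos: "k \<ge> 1" unfolding N3_def by simp
    have kk1: "real (k^2) \<le> real T" using k1
      by (metis of_nat_0_le_iff of_nat_power real_sqrt_le_iff real_sqrt_pow2_iff real_sqrt_power)
    then have kT: "k^2 \<le> T" by linarith
    have kk2: "real T < (real k + 1)^2" using k2
      by (smt (verit) real_le_rsqrt)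
    obtain n where kn: "k = Suc n" using kpos by (cases k) auto
    have nN: "n \<ge> N" using kN3 kn unfolding N3_def by simp
    have A: "\<bar>s (k^2)\<bar> < r/2 * real (k^2)"
      using N[OF nN] kn kpos by (simp add: abs_divide divide_less_eq)
    have B: "\<bar>s T - s (k^2)\<bar> \<le> 2 * real k"
    proof -
      have "\<bar>s T - s (k^2)\<bar> \<le> real T - real (k^2)" using lip[OF kT] .
      also have "\<dots> \<le> 2 * real k"
      proof -
        have "real T < real ((k+1)^2)" using kk2 by (simp add: add.commute)
        then have "T < (k+1)^2" by (simp only: of_nat_less_iff)
        moreover have "(k+1)^2 = k^2 + 2*k + 1" by (simp add: power2_eq_square algebra_simps)
        ultimately have "T \<le> k^2 + 2*k" by simp
        then have "real T \<le> real (k^2) + 2 * real k" by (metis of_nat_add of_nat_le_iff of_nat_mult of_nat_numeral)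
        then show ?thesis by simp
      qed
      finally show ?thesis .
    qed
    have Tpos: "real T \<ge> real (k^2)" using kk1 .
    have "2 * real k < r/2 * real (k^2)"
    proof -
      have "real k \<ge> real N2" using kN3 unfolding N3_def by simp
      then have "real k > 4 / r" using N2 by linarith
      then have "real k * r > 4" using r by (simp add: field_simps)
      then have "r/2 * real k > 2" by (simp add: mult.commute)
      then have "r/2 * real k * real k > 2 * real k" using kpos by simp
      then show ?thesis by (simp add: power2_eq_square mult.assoc)
    qed
    then have "\<bar>s T\<bar> < r * real (k^2)" using A B by linarith
    also have "\<dots> \<le> r * real T" using Tpos r by simp
    finally have "\<bar>s T\<bar> < r * real T" .
    moreover have "real T > 0" proof -
      have "0 < k^2" using kpos by simp
      then have "0 < T" using kT by linarith
      then show ?thesis by simp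
    qed
    ultimately show "norm (s T / real T - 0) < r" by (simp add: abs_divide field_simps)
  qed
qed

lemma bnd_int:
  assumes "prob_space M" "f \<in> borel_measurable M" "\<And>\<omega>. \<omega> \<in> space M \<Longrightarrow> \<bar>f \<omega>\<bar> \<le> (B::real)"
  shows "integrable M f"
proof -
  interpret prob_space M by fact
  show ?thesis by (rule integrable_const_bound[where B=B]) (use assms in \<open>auto intro!: AE_I2\<close>)
qed

lemma orth_nn:
  assumes P: "prob_space M" and sub: "subalgebra M G"
    and X: "X \<in> M \<rightarrow>\<^sub>M N" and K: "K \<in> G \<rightarrow>\<^sub>M prob_algebra N"
    and law: "\<And>C B. C \<in> sets G \<Longrightarrow> B \<in> sets N \<Longrightarrow>
        measure M (C \<inter> {\<omega> \<in> space M. X \<omega> \<in> B}) = (\<integral>\<omega>. indicator C \<omega> * measure (K \<omega>) B \<partial>M)"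
    and D: "D \<in> sets (G \<Otimes>\<^sub>M N)"
    and g: "g \<in> borel_measurable G" and gb: "\<And>\<omega>. \<omega> \<in> space M \<Longrightarrow> 0 \<le> g \<omega> \<and> g \<omega> \<le> (B::real)"
  shows "(\<integral>\<omega>. g \<omega> * indicator D (\<omega>, X \<omega>) \<partial>M) = (\<integral>\<omega>. g \<omega> * measure (K \<omega>) (Pair \<omega> -` D) \<partial>M)"
proof -
  interpret prob_space M by fact
  have spG: "space G = space M" using sub unfolding subalgebra_def by auto
  have Ksub: "K \<in> G \<rightarrow>\<^sub>M subprob_algebra N" using measurable_prob_algebraD[OF K] .
  have Kw: "\<And>\<omega>. \<omega> \<in> space M \<Longrightarrow> sets (K \<omega>) = sets N \<and> prob_space (K \<omega>)"
    using measurable_space[OF K] spG by (auto simp: space_prob_algebra)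
  have idM: "(\<lambda>\<omega>. \<omega>) \<in> M \<rightarrow>\<^sub>M G" using sub unfolding subalgebra_def
    by (intro measurableI) (auto)
  have pairX: "(\<lambda>\<omega>. (\<omega>, X \<omega>)) \<in> M \<rightarrow>\<^sub>M G \<Otimes>\<^sub>M N"
    using idM X by (intro measurable_Pair) auto
  have gM: "g \<in> borel_measurable M" using measurable_from_subalg[OF sub g] .
  have Dsp: "D \<subseteq> space G \<times> space N" using sets.sets_into_space[OF D] by (simp add: space_pair_measure)
  have SIG: "(SIGMA x:space G. Pair x -` D) = D" using Dsp by auto
  have pG: "(\<lambda>\<omega>. measure (K \<omega>) (Pair \<omega> -` D)) \<in> borel_measurable G"
    by (rule measure_measurable_subprob_algebra2[OF _ Ksub]) (simp add: SIG D)
  have pM: "(\<lambda>\<omega>. measure (K \<omega>) (Pair \<omega> -` D)) \<in> borel_measurable M"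
    using measurable_from_subalg[OF sub pG] .
  have indM: "(\<lambda>\<omega>. indicator D (\<omega>, X \<omega>) :: real) \<in> borel_measurable M"
    using measurable_compose[OF pairX borel_measurable_indicator[OF D]] .
  have lm: "(\<lambda>\<omega>. g \<omega> * indicator D (\<omega>, X \<omega>)) \<in> borel_measurable M"
    using gM indM by (rule borel_measurable_times)
  have rm: "(\<lambda>\<omega>. g \<omega> * measure (K \<omega>) (Pair \<omega> -` D)) \<in> borel_measurable M"
    using gM pM by (rule borel_measurable_times)
  have pb: "\<And>\<omega>. \<omega> \<in> space M \<Longrightarrow> 0 \<le> measure (K \<omega>) (Pair \<omega> -` D) \<and> measure (K \<omega>) (Pair \<omega> -` D) \<le> 1"
    using Kw by (auto simp: prob_space.prob_le_1)
  have li: "integrable M (\<lambda>\<omega>. g \<omega> * indicator D (\<omega>, X \<omega>))"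
  proof (rule bnd_int[OF P lm, where B=B])
    fix \<omega> assume "\<omega> \<in> space M" then show "\<bar>g \<omega> * indicator D (\<omega>, X \<omega>)\<bar> \<le> B"
      using gb[of \<omega>] by (auto simp: indicator_def)
  qed
  have ri: "integrable M (\<lambda>\<omega>. g \<omega> * measure (K \<omega>) (Pair \<omega> -` D))"
  proof (rule bnd_int[OF P rm, where B=B])
    fix \<omega> assume w: "\<omega> \<in> space M" then show "\<bar>g \<omega> * measure (K \<omega>) (Pair \<omega> -` D)\<bar> \<le> B"
    proof -
      have "g \<omega> * measure (K \<omega>) (Pair \<omega> -` D) \<le> B * 1"
        by (rule mult_mono) (use gb[OF w] pb[OF w] in auto)
      moreover have "0 \<le> g \<omega> * measure (K \<omega>) (Pair \<omega> -` D)" using gb[OF w] pb[OF w] by simp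
      ultimately show ?thesis by simp
    qed
  qed
  define f where "f = (\<lambda>z. ennreal (g (fst z) * indicator D z))"
  have fm: "f \<in> borel_measurable (G \<Otimes>\<^sub>M N)" unfolding f_def
    using g D by measurable
  have "ennreal (\<integral>\<omega>. g \<omega> * indicator D (\<omega>, X \<omega>) \<partial>M) = (\<integral>\<^sup>+\<omega>. ennreal (g \<omega> * indicator D (\<omega>, X \<omega>)) \<partial>M)"
    by (rule nn_integral_eq_integral[symmetric, OF li]) (use gb in \<open>auto intro!: AE_I2 simp: indicator_def\<close>)
  also have "\<dots> = (\<integral>\<^sup>+\<omega>. f (\<omega>, X \<omega>) \<partial>M)" unfolding f_def by simp
  also have "\<dots> = (\<integral>\<^sup>+\<omega>. (\<integral>\<^sup>+x. f (\<omega>, x) \<partial>K \<omega>) \<partial>M)"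
    by (rule key_law[OF P sub X K law fm])
  also have "\<dots> = (\<integral>\<^sup>+\<omega>. ennreal (g \<omega> * measure (K \<omega>) (Pair \<omega> -` D)) \<partial>M)"
  proof (rule nn_integral_cong)
    fix \<omega> assume w: "\<omega> \<in> space M"
    interpret Kp: prob_space "K \<omega>" using Kw[OF w] by auto
    have sD: "Pair \<omega> -` D \<in> sets (K \<omega>)" using Kw[OF w] sets_Pair1[OF D] by simp
    have "(\<integral>\<^sup>+x. f (\<omega>, x) \<partial>K \<omega>) = (\<integral>\<^sup>+x. ennreal (g \<omega>) * indicator (Pair \<omega> -` D) x \<partial>K \<omega>)"
      unfolding f_def using gb[OF w] by (intro nn_integral_cong) (auto simp: indicator_def)
    also have "\<dots> = ennreal (g \<omega>) * emeasure (K \<omega>) (Pair \<omega> -` D)"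
      by (rule nn_integral_cmult_indicator[OF sD])
    also have "\<dots> = ennreal (g \<omega> * measure (K \<omega>) (Pair \<omega> -` D))"
      using gb[OF w] by (simp add: Kp.emeasure_eq_measure ennreal_mult)
    finally show "(\<integral>\<^sup>+x. f (\<omega>, x) \<partial>K \<omega>) = ennreal (g \<omega> * measure (K \<omega>) (Pair \<omega> -` D))" .
  qed
  also have "\<dots> = ennreal (\<integral>\<omega>. g \<omega> * measure (K \<omega>) (Pair \<omega> -` D) \<partial>M)"
    by (rule nn_integral_eq_integral[OF ri]) (use gb pb in \<open>auto intro!: AE_I2\<close>)
  finally have e: "ennreal (\<integral>\<omega>. g \<omega> * indicator D (\<omega>, X \<omega>) \<partial>M) = ennreal (\<integral>\<omega>. g \<omega> * measure (K \<omega>) (Pair \<omega> -` D) \<partial>M)" .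
  have n1: "0 \<le> (\<integral>\<omega>. g \<omega> * indicator D (\<omega>, X \<omega>) \<partial>M)"
    by (rule integral_nonneg_AE) (use gb in \<open>auto intro!: AE_I2 simp: indicator_def\<close>)
  have n2: "0 \<le> (\<integral>\<omega>. g \<omega> * measure (K \<omega>) (Pair \<omega> -` D) \<partial>M)"
    by (rule integral_nonneg_AE) (use gb pb in \<open>auto intro!: AE_I2\<close>)
  show ?thesis using e n1 n2 by simp
qed

lemma kern_meas:
  assumes K: "K \<in> G \<rightarrow>\<^sub>M prob_algebra N" and D: "D \<in> sets (G \<Otimes>\<^sub>M N)"
  shows "(\<lambda>\<omega>. measure (K \<omega>) (Pair \<omega> -` D)) \<in> borel_measurable G"
proof -
  have Dsp: "D \<subseteq> space G \<times> space N" using sets.sets_into_space[OF D] by (simp add: space_pair_measure)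
  have SIG: "(SIGMA x:space G. Pair x -` D) = D" using Dsp by auto
  show ?thesis
    by (rule measure_measurable_subprob_algebra2[OF _ measurable_prob_algebraD[OF K]]) (simp add: SIG D)
qed

lemma orth:
  assumes P: "prob_space M" and sub: "subalgebra M G"
    and X: "X \<in> M \<rightarrow>\<^sub>M N" and K: "K \<in> G \<rightarrow>\<^sub>M prob_algebra N"
    and law: "\<And>C B. C \<in> sets G \<Longrightarrow> B \<in> sets N \<Longrightarrow>
        measure M (C \<inter> {\<omega> \<in> space M. X \<omega> \<in> B}) = (\<integral>\<omega>. indicator C \<omega> * measure (K \<omega>) B \<partial>M)"
    and D: "D \<in> sets (G \<Otimes>\<^sub>M N)"
    and g: "g \<in> borel_measurable G" and gb: "\<And>\<omega>. \<omega> \<in> space M \<Longrightarrow> \<bar>g \<omega>\<bar> \<le> (B::real)"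
  shows "(\<integral>\<omega>. g \<omega> * (indicator D (\<omega>, X \<omega>) - measure (K \<omega>) (Pair \<omega> -` D)) \<partial>M) = 0"
proof -
  interpret prob_space M by fact
  have spG: "space G = space M" using sub unfolding subalgebra_def by auto
  have Kw: "\<And>\<omega>. \<omega> \<in> space M \<Longrightarrow> sets (K \<omega>) = sets N \<and> prob_space (K \<omega>)"
    using measurable_space[OF K] spG by (auto simp: space_prob_algebra)
  have idM: "(\<lambda>\<omega>. \<omega>) \<in> M \<rightarrow>\<^sub>M G" using sub unfolding subalgebra_def
    by (intro measurableI) (auto)
  have pairX: "(\<lambda>\<omega>. (\<omega>, X \<omega>)) \<in> M \<rightarrow>\<^sub>M G \<Otimes>\<^sub>M N"
    using idM X by (intro measurable_Pair) auto
  have gM: "g \<in> borel_measurable M" using measurable_from_subalg[OF sub g] .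
  have pM: "(\<lambda>\<omega>. measure (K \<omega>) (Pair \<omega> -` D)) \<in> borel_measurable M"
    using measurable_from_subalg[OF sub kern_meas[OF K D]] .
  have indM: "(\<lambda>\<omega>. indicator D (\<omega>, X \<omega>) :: real) \<in> borel_measurable M"
    using measurable_compose[OF pairX borel_measurable_indicator[OF D]] .
  have pb: "\<And>\<omega>. \<omega> \<in> space M \<Longrightarrow> 0 \<le> measure (K \<omega>) (Pair \<omega> -` D) \<and> measure (K \<omega>) (Pair \<omega> -` D) \<le> 1"
    using Kw by (auto simp: prob_space.prob_le_1)
  define gp where "gp = (\<lambda>\<omega>. max (g \<omega>) 0)"
  define gn where "gn = (\<lambda>\<omega>. max (- g \<omega>) 0)"
  have gpG: "gp \<in> borel_measurable G" unfolding gp_def using g by measurable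
  have gnG: "gn \<in> borel_measurable G" unfolding gn_def using g by measurable
  have gpM: "gp \<in> borel_measurable M" using measurable_from_subalg[OF sub gpG] .
  have gnM: "gn \<in> borel_measurable M" using measurable_from_subalg[OF sub gnG] .
  have gpb: "\<And>\<omega>. \<omega> \<in> space M \<Longrightarrow> 0 \<le> gp \<omega> \<and> gp \<omega> \<le> B" unfolding gp_def using gb by fastforce
  have gnb: "\<And>\<omega>. \<omega> \<in> space M \<Longrightarrow> 0 \<le> gn \<omega> \<and> gn \<omega> \<le> B" unfolding gn_def using gb by fastforce
  have gsplit: "\<And>\<omega>. g \<omega> = gp \<omega> - gn \<omega>" unfolding gp_def gn_def by auto
  have e1: "(\<integral>\<omega>. gp \<omega> * indicator D (\<omega>, X \<omega>) \<partial>M) = (\<integral>\<omega>. gp \<omega> * measure (K \<omega>) (Pair \<omega> -` D) \<partial>M)"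
    by (rule orth_nn[OF P sub X K law D gpG gpb])
  have e2: "(\<integral>\<omega>. gn \<omega> * indicator D (\<omega>, X \<omega>) \<partial>M) = (\<integral>\<omega>. gn \<omega> * measure (K \<omega>) (Pair \<omega> -` D) \<partial>M)"
    by (rule orth_nn[OF P sub X K law D gnG gnb])
  have i1: "integrable M (\<lambda>\<omega>. gp \<omega> * indicator D (\<omega>, X \<omega>))"
    by (rule bnd_int[OF P borel_measurable_times[OF gpM indM], where B=B]) (use gpb in \<open>fastforce simp: indicator_def\<close>)
  have i2: "integrable M (\<lambda>\<omega>. gn \<omega> * indicator D (\<omega>, X \<omega>))"
    by (rule bnd_int[OF P borel_measurable_times[OF gnM indM], where B=B]) (use gnb in \<open>fastforce simp: indicator_def\<close>)
  have i3: "integrable M (\<lambda>\<omega>. gp \<omega> * measure (K \<omega>) (Pair \<omega> -` D))"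
  proof (rule bnd_int[OF P borel_measurable_times[OF gpM pM], where B=B])
    fix \<omega> assume w: "\<omega> \<in> space M"
    have "gp \<omega> * measure (K \<omega>) (Pair \<omega> -` D) \<le> B * 1"
      by (rule mult_mono) (use gpb[OF w] pb[OF w] in auto)
    then show "\<bar>gp \<omega> * measure (K \<omega>) (Pair \<omega> -` D)\<bar> \<le> B" using gpb[OF w] pb[OF w] by simp
  qed
  have i4: "integrable M (\<lambda>\<omega>. gn \<omega> * measure (K \<omega>) (Pair \<omega> -` D))"
  proof (rule bnd_int[OF P borel_measurable_times[OF gnM pM], where B=B])
    fix \<omega> assume w: "\<omega> \<in> space M"
    have "gn \<omega> * measure (K \<omega>) (Pair \<omega> -` D) \<le> B * 1"
      by (rule mult_mono) (use gnb[OF w] pb[OF w] in auto)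
    then show "\<bar>gn \<omega> * measure (K \<omega>) (Pair \<omega> -` D)\<bar> \<le> B" using gnb[OF w] pb[OF w] by simp
  qed
  have "(\<lambda>\<omega>. g \<omega> * (indicator D (\<omega>, X \<omega>) - measure (K \<omega>) (Pair \<omega> -` D))) =
        (\<lambda>\<omega>. (gp \<omega> * indicator D (\<omega>, X \<omega>) - gn \<omega> * indicator D (\<omega>, X \<omega>))
            - (gp \<omega> * measure (K \<omega>) (Pair \<omega> -` D) - gn \<omega> * measure (K \<omega>) (Pair \<omega> -` D)))"
    by (rule ext) (simp add: gsplit algebra_simps)
  then have "(\<integral>\<omega>. g \<omega> * (indicator D (\<omega>, X \<omega>) - measure (K \<omega>) (Pair \<omega> -` D)) \<partial>M) =
      ((\<integral>\<omega>. gp \<omega> * indicator D (\<omega>, X \<omega>) \<partial>M) - (\<integral>\<omega>. gn \<omega> * indicator D (\<omega>, X \<omega>) \<partial>M))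
      - ((\<integral>\<omega>. gp \<omega> * measure (K \<omega>) (Pair \<omega> -` D) \<partial>M) - (\<integral>\<omega>. gn \<omega> * measure (K \<omega>) (Pair \<omega> -` D) \<partial>M))"
    using i1 i2 i3 i4 by (simp add: Bochner_Integration.integral_diff)
  then show ?thesis using e1 e2 by simp
qed

theorem mainTheorem15:
  fixes M :: "'w measure" and F :: "nat \<Rightarrow> 'w measure" and nu :: "'x measure"
    and xs :: "nat \<Rightarrow> 'w \<Rightarrow> 'x" and mu :: "nat \<Rightarrow> 'w \<Rightarrow> 'x measure"
    and c :: "'x \<Rightarrow> 'y" and h :: "nat \<Rightarrow> 'w \<Rightarrow> 'x \<Rightarrow> 'y" and Ms :: "'x measure set"
  assumes prob: "prob_space M"
    and filt_sub: "\<And>t. subalgebra M (F t)"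
    and filt_mono: "\<And>s t. s \<le> t \<Longrightarrow> sets (F s) \<subseteq> sets (F t)"
    and adapted: "\<And>t. xs t \<in> F (Suc t) \<rightarrow>\<^sub>M nu"
    and dom: "uniformly_dominates nu Ms"
    and adv_dom: "\<And>t \<omega>. \<omega> \<in> space M \<Longrightarrow> mu t \<omega> \<in> Ms"
    and adv_kernel: "\<And>t. mu t \<in> F t \<rightarrow>\<^sub>M prob_algebra nu"
    and cond_law: "\<And>t C B. C \<in> sets (F t) \<Longrightarrow> B \<in> sets nu \<Longrightarrow>
        measure M (C \<inter> {\<omega> \<in> space M. xs t \<omega> \<in> B})
          = (\<integral>\<omega>. indicator C \<omega> * measure (mu t \<omega>) B \<partial>M)"
    and learner_past: "\<And>t \<omega> \<omega>'. \<omega> \<in> space M \<Longrightarrow> \<omega>' \<in> space M \<Longrightarrow>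
        (\<forall>s<t. xs s \<omega> = xs s \<omega>') \<Longrightarrow> h t \<omega> = h t \<omega>'"
    and mistake_meas: "\<And>t. {(\<omega>, x) \<in> space M \<times> space nu. h t \<omega> x \<noteq> c x} \<in> sets (F t \<Otimes>\<^sub>M nu)"
    and small: "AE \<omega> in M. (\<lambda>t. emeasure nu {x \<in> space nu. h t \<omega> x \<noteq> c x}) \<longlonglongrightarrow> 0"
  shows "AE \<omega> in M. (\<lambda>T. (\<Sum>t<T. if c (xs t \<omega>) \<noteq> h t \<omega> (xs t \<omega>) then 1 else 0) / real T)
           \<longlonglongrightarrow> (0::real)"
proof -
  interpret prob_space M by fact
  have spF: "\<And>t. space (F t) = space M" using filt_sub unfolding subalgebra_def by auto
  have subts: "\<And>s t. s \<le> t \<Longrightarrow> subalgebra (F t) (F s)"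
    unfolding subalgebra_def using filt_mono spF by auto
  define D where "D = (\<lambda>t. {(\<omega>, x) \<in> space M \<times> space nu. h t \<omega> x \<noteq> c x})"
  have Dm: "\<And>t. D t \<in> sets (F t \<Otimes>\<^sub>M nu)" unfolding D_def by (rule mistake_meas)
  have Xm: "\<And>t. xs t \<in> M \<rightarrow>\<^sub>M nu" using measurable_from_subalg[OF filt_sub adapted] .
  have xsp: "\<And>t \<omega>. \<omega> \<in> space M \<Longrightarrow> xs t \<omega> \<in> space nu"
    using measurable_space[OF adapted] spF by blast
  have Kw: "\<And>t \<omega>. \<omega> \<in> space M \<Longrightarrow> sets (mu t \<omega>) = sets nu \<and> prob_space (mu t \<omega>)"
    using measurable_space[OF adv_kernel] spF by (auto simp: space_prob_algebra)
  define I where "I = (\<lambda>t \<omega>. indicator (D t) (\<omega>, xs t \<omega>) :: real)"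
  define p where "p = (\<lambda>t \<omega>. measure (mu t \<omega>) (Pair \<omega> -` D t))"
  define Z where "Z = (\<lambda>t \<omega>. I t \<omega> - p t \<omega>)"
  define S where "S = (\<lambda>T \<omega>. \<Sum>t<T. Z t \<omega>)"
  have pb: "\<And>t \<omega>. \<omega> \<in> space M \<Longrightarrow> 0 \<le> p t \<omega> \<and> p t \<omega> \<le> 1"
    unfolding p_def using Kw by (auto simp: prob_space.prob_le_1)
  have Zb: "\<And>t \<omega>. \<omega> \<in> space M \<Longrightarrow> \<bar>Z t \<omega>\<bar> \<le> 1"
    unfolding Z_def I_def using pb by (auto simp: indicator_def)
  have Sb: "\<And>T \<omega>. \<omega> \<in> space M \<Longrightarrow> \<bar>S T \<omega>\<bar> \<le> real T"
  proof -
    fix T \<omega> assume w: "\<omega> \<in> space M"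
    have "\<bar>S T \<omega>\<bar> \<le> (\<Sum>t<T. \<bar>Z t \<omega>\<bar>)" unfolding S_def by (rule sum_abs)
    also have "\<dots> \<le> (\<Sum>t<T. 1)" by (rule sum_mono) (rule Zb[OF w])
    finally show "\<bar>S T \<omega>\<bar> \<le> real T" by simp
  qed
  have Im: "\<And>t. I t \<in> borel_measurable (F (Suc t))"
  proof -
    fix t
    have "(\<lambda>\<omega>. \<omega>) \<in> F (Suc t) \<rightarrow>\<^sub>M F t"
      using measurable_from_subalg[OF subts[of t "Suc t"] measurable_ident] by (simp add: id_def)
    then have "(\<lambda>\<omega>. (\<omega>, xs t \<omega>)) \<in> F (Suc t) \<rightarrow>\<^sub>M F t \<Otimes>\<^sub>M nu"
      using adapted by (intro measurable_Pair) auto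
    then show "I t \<in> borel_measurable (F (Suc t))" unfolding I_def
      using measurable_compose borel_measurable_indicator[OF Dm] by blast
  qed
  have pm: "\<And>t. p t \<in> borel_measurable (F t)" unfolding p_def
    using kern_meas[OF adv_kernel Dm] by blast
  have Zm: "Z t \<in> borel_measurable (F (Suc t))" for t unfolding Z_def
    using Im measurable_from_subalg[OF subts[of t "Suc t"] pm] by (intro borel_measurable_diff) auto
  have Sm: "\<And>T. S T \<in> borel_measurable (F T)"
  proof -
    fix T
    have "\<And>t. t \<in> {..<T} \<Longrightarrow> Z t \<in> borel_measurable (F T)"
      using measurable_from_subalg[OF subts Zm] by auto
    then show "S T \<in> borel_measurable (F T)" unfolding S_def by (intro borel_measurable_sum) auto
  qed
  have ZmM: "\<And>t. Z t \<in> borel_measurable M" using measurable_from_subalg[OF filt_sub Zm] .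
  have SmM: "\<And>T. S T \<in> borel_measurable M" using measurable_from_subalg[OF filt_sub Sm] .
  have orthS: "\<And>T. (\<integral>\<omega>. S T \<omega> * Z T \<omega> \<partial>M) = 0"
  proof -
    fix T
    show "(\<integral>\<omega>. S T \<omega> * Z T \<omega> \<partial>M) = 0"
      using orth[OF prob filt_sub[of T] Xm[of T] adv_kernel[of T] cond_law[where t=T] Dm[of T] Sm[of T] Sb[of _ T]]
      unfolding Z_def I_def p_def .
  qed
  have sec: "\<And>T. (\<integral>\<omega>. (S T \<omega>)^2 \<partial>M) \<le> real T"
  proof -
    fix T show "(\<integral>\<omega>. (S T \<omega>)^2 \<partial>M) \<le> real T"
    proof (induction T)
      case 0 then show ?case by (simp add: S_def)
    next
      case (Suc T)
      have eq: "(\<lambda>\<omega>. (S (Suc T) \<omega>)^2) = (\<lambda>\<omega>. ((S T \<omega>)^2 + 2 * (S T \<omega> * Z T \<omega>)) + (Z T \<omega>)^2)"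
        by (rule ext) (simp add: S_def power2_eq_square algebra_simps)
      have i1: "integrable M (\<lambda>\<omega>. (S T \<omega>)^2)"
      proof (rule bnd_int[OF prob _, where B="real T ^ 2"])
        show "(\<lambda>\<omega>. (S T \<omega>)^2) \<in> borel_measurable M" using SmM[of T] by measurable
        fix \<omega> assume w: "\<omega> \<in> space M"
        have "\<bar>S T \<omega>\<bar>^2 \<le> (real T)^2" by (rule power_mono[OF Sb[OF w]]) simp
        then show "\<bar>(S T \<omega>)^2\<bar> \<le> real T ^ 2" by simp
      qed
      have i2: "integrable M (\<lambda>\<omega>. 2 * (S T \<omega> * Z T \<omega>))"
      proof (rule bnd_int[OF prob _, where B="2 * real T"])
        show "(\<lambda>\<omega>. 2 * (S T \<omega> * Z T \<omega>)) \<in> borel_measurable M" using SmM ZmM by measurable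
        fix \<omega> assume w: "\<omega> \<in> space M"
        have "\<bar>S T \<omega> * Z T \<omega>\<bar> \<le> real T * 1" unfolding abs_mult
          by (rule mult_mono) (use Sb[OF w] Zb[OF w] in auto)
        then show "\<bar>2 * (S T \<omega> * Z T \<omega>)\<bar> \<le> 2 * real T" by simp
      qed
      have i3: "integrable M (\<lambda>\<omega>. (Z T \<omega>)^2)"
        by (rule bnd_int[OF prob _, where B=1]) (use ZmM Zb in \<open>auto simp: abs_le_square_iff abs_square_le_1\<close>)
      have z3: "(\<integral>\<omega>. (Z T \<omega>)^2 \<partial>M) \<le> 1"
      proof -
        have "(\<integral>\<omega>. (Z T \<omega>)^2 \<partial>M) \<le> (\<integral>\<omega>. 1 \<partial>M)"
          by (rule integral_mono[OF i3]) (use Zb in \<open>auto simp: abs_square_le_1\<close>)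
        then show ?thesis by (simp add: prob_space)
      qed
      have "(\<integral>\<omega>. (S (Suc T) \<omega>)^2 \<partial>M) = (\<integral>\<omega>. (S T \<omega>)^2 \<partial>M) + 2 * (\<integral>\<omega>. S T \<omega> * Z T \<omega> \<partial>M) + (\<integral>\<omega>. (Z T \<omega>)^2 \<partial>M)"
        unfolding eq using i1 i2 i3 by (simp add: Bochner_Integration.integral_add)
      then show ?case using Suc z3 orthS[of T] by simp
    qed
  qed
  define W where "W = (\<lambda>n \<omega>. (S ((Suc n)^2) \<omega> / real ((Suc n)^2))^2)"
  have Wm: "\<And>n. W n \<in> borel_measurable M" unfolding W_def using SmM by measurable
  have Wi: "\<And>n. integrable M (W n)"
  proof -
    fix n
    show "integrable M (W n)"
    proof (rule bnd_int[OF prob Wm, where B=1])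
      fix \<omega> assume w: "\<omega> \<in> space M"
      have "\<bar>S ((Suc n)^2) \<omega> / real ((Suc n)^2)\<bar> \<le> 1"
        using Sb[OF w, of "(Suc n)^2"] by (simp add: abs_divide divide_le_eq_1)
      then show "\<bar>W n \<omega>\<bar> \<le> 1" unfolding W_def by (simp add: abs_square_le_1)
    qed
  qed
  have EW: "\<And>n. (\<integral>\<omega>. W n \<omega> \<partial>M) \<le> 1 / real (Suc n)^2"
  proof -
    fix n
    define m where "m = (Suc n)^2"
    have mpos: "real m > 0" unfolding m_def by simp
    have "(\<integral>\<omega>. W n \<omega> \<partial>M) = (\<integral>\<omega>. (S m \<omega>)^2 \<partial>M) / (real m)^2"
      unfolding W_def m_def[symmetric] by (simp add: power_divide)
    also have "\<dots> \<le> real m / (real m)^2"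
      using sec[of m] mpos by (simp add: divide_right_mono)
    also have "\<dots> = 1 / real m" using mpos by (simp add: power2_eq_square)
    also have "real m = real (Suc n)^2" unfolding m_def by (simp only: of_nat_power)
    finally show "(\<integral>\<omega>. W n \<omega> \<partial>M) \<le> 1 / real (Suc n)^2" .
  qed
  have W0: "\<And>n \<omega>. 0 \<le> W n \<omega>" unfolding W_def by simp
  have EW0: "\<And>n. 0 \<le> (\<integral>\<omega>. W n \<omega> \<partial>M)" using W0 by simp
  have sumq: "summable (\<lambda>n. 1 / real (Suc n)^2)"
    using inverse_power_summable[of 2, where 'a=real] summable_Suc_iff[where f="\<lambda>n. inverse (real n ^ 2)"]
    by (simp add: inverse_eq_divide)
  have sumEW: "summable (\<lambda>n. \<integral>\<omega>. W n \<omega> \<partial>M)"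
    by (rule summable_comparison_test[OF _ sumq]) (use EW EW0 in auto)
  have "(\<integral>\<^sup>+\<omega>. (\<Sum>n. ennreal (W n \<omega>)) \<partial>M) = (\<Sum>n. \<integral>\<^sup>+\<omega>. ennreal (W n \<omega>) \<partial>M)"
    by (rule nn_integral_suminf) (use Wm in measurable)
  also have "\<dots> = (\<Sum>n. ennreal (\<integral>\<omega>. W n \<omega> \<partial>M))"
    using nn_integral_eq_integral[OF Wi] W0 by simp
  also have "\<dots> = ennreal (\<Sum>n. \<integral>\<omega>. W n \<omega> \<partial>M)"
    by (rule suminf_ennreal2[OF EW0 sumEW])
  finally have fin: "(\<integral>\<^sup>+\<omega>. (\<Sum>n. ennreal (W n \<omega>)) \<partial>M) \<noteq> \<infinity>" by simp
  have AE1: "AE \<omega> in M. (\<Sum>n. ennreal (W n \<omega>)) \<noteq> \<infinity>"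
    by (rule nn_integral_PInf_AE[OF _ fin]) (use Wm in measurable)
  have AES: "AE \<omega> in M. (\<lambda>T. S T \<omega> / real T) \<longlonglongrightarrow> 0"
  proof (rule AE_mp[OF AE1], rule AE_I2, rule impI)
    fix \<omega> assume w: "\<omega> \<in> space M" and f: "(\<Sum>n. ennreal (W n \<omega>)) \<noteq> \<infinity>"
    have "summable (\<lambda>n. W n \<omega>)" by (rule summable_suminf_not_top) (use W0 f in auto)
    then have "(\<lambda>n. W n \<omega>) \<longlonglongrightarrow> 0" by (rule summable_LIMSEQ_zero)
    then have "(\<lambda>n. sqrt (W n \<omega>)) \<longlonglongrightarrow> sqrt 0" by (rule tendsto_real_sqrt)
    then have "(\<lambda>n. \<bar>S ((Suc n)^2) \<omega> / real ((Suc n)^2)\<bar>) \<longlonglongrightarrow> 0" unfolding W_def real_sqrt_abs real_sqrt_zero .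
    then have sub: "(\<lambda>n. S ((Suc n)^2) \<omega> / real ((Suc n)^2)) \<longlonglongrightarrow> 0"
      by (rule tendsto_rabs_zero_cancel)
    show "(\<lambda>T. S T \<omega> / real T) \<longlonglongrightarrow> 0"
    proof (rule interp0[OF _ sub])
      fix T m :: nat assume mT: "m \<le> T"
      have "(\<Sum>t<T. Z t \<omega>) = (\<Sum>t<m. Z t \<omega>) + (\<Sum>t\<in>{m..<T}. Z t \<omega>)"
        using mT by (metis atLeast0LessThan sum.atLeastLessThan_concat zero_le)
      then have "S T \<omega> - S m \<omega> = (\<Sum>t\<in>{m..<T}. Z t \<omega>)" unfolding S_def by simp
      then have "\<bar>S T \<omega> - S m \<omega>\<bar> \<le> (\<Sum>t\<in>{m..<T}. \<bar>Z t \<omega>\<bar>)" using sum_abs by simp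
      also have "\<dots> \<le> (\<Sum>t\<in>{m..<T}. 1)" by (rule sum_mono) (rule Zb[OF w])
      finally show "\<bar>S T \<omega> - S m \<omega>\<bar> \<le> real T - real m" using mT by simp
    qed
  qed
  have AEp: "AE \<omega> in M. (\<lambda>T. (\<Sum>t<T. p t \<omega>) / real T) \<longlonglongrightarrow> 0"
  proof (rule AE_mp[OF small], rule AE_I2, rule impI)
    fix \<omega> assume w: "\<omega> \<in> space M"
      and conv: "(\<lambda>t. emeasure nu {x \<in> space nu. h t \<omega> x \<noteq> c x}) \<longlonglongrightarrow> 0"
    have sec_eq: "\<And>t. Pair \<omega> -` D t = {x \<in> space nu. h t \<omega> x \<noteq> c x}"
      unfolding D_def using w by auto
    have "(\<lambda>t. p t \<omega>) \<longlonglongrightarrow> 0"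
    proof (rule LIMSEQ_I)
      fix r :: real assume r: "0 < r"
      obtain \<delta> where dpos: "\<delta> > 0" and dd: "\<And>A \<mu>. A \<in> sets nu \<Longrightarrow> emeasure nu A < ennreal \<delta> \<Longrightarrow> \<mu> \<in> Ms \<Longrightarrow> emeasure \<mu> A < ennreal r"
        using dom r unfolding uniformly_dominates_def by blast
      have "eventually (\<lambda>t. emeasure nu {x \<in> space nu. h t \<omega> x \<noteq> c x} < ennreal \<delta>) sequentially"
        using order_tendstoD(2)[OF conv] dpos by simp
      then obtain N where N: "\<And>t. t \<ge> N \<Longrightarrow> emeasure nu {x \<in> space nu. h t \<omega> x \<noteq> c x} < ennreal \<delta>"
        by (auto simp: eventually_sequentially)
      show "\<exists>no. \<forall>t\<ge>no. norm (p t \<omega> - 0) < r"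
      proof (intro exI allI impI)
        fix t assume t: "t \<ge> N"
        have As: "{x \<in> space nu. h t \<omega> x \<noteq> c x} \<in> sets nu"
          using sets_Pair1[OF Dm[of t], of \<omega>] sec_eq by simp
        have em: "emeasure (mu t \<omega>) {x \<in> space nu. h t \<omega> x \<noteq> c x} < ennreal r"
          by (rule dd[OF As N[OF t] adv_dom[OF w]])
        interpret Kp: prob_space "mu t \<omega>" using Kw[OF w] by auto
        from em have "measure (mu t \<omega>) {x \<in> space nu. h t \<omega> x \<noteq> c x} < r"
          using r by (simp add: Kp.emeasure_eq_measure ennreal_less_iff)
        then show "norm (p t \<omega> - 0) < r" unfolding p_def sec_eq using pb[OF w, of t] unfolding p_def sec_eq by simp
      qed
    qed
    then show "(\<lambda>T. (\<Sum>t<T. p t \<omega>) / real T) \<longlonglongrightarrow> 0" by (rule cesaro0)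
  qed
  show ?thesis
  proof (rule AE_mp[OF AE_conjI[OF AES AEp]], rule AE_I2, rule impI)
    fix \<omega> assume w: "\<omega> \<in> space M"
      and h: "(\<lambda>T. S T \<omega> / real T) \<longlonglongrightarrow> 0 \<and> (\<lambda>T. (\<Sum>t<T. p t \<omega>) / real T) \<longlonglongrightarrow> 0"
    have Ieq: "\<And>t. (if c (xs t \<omega>) \<noteq> h t \<omega> (xs t \<omega>) then 1 else 0) = Z t \<omega> + p t \<omega>"
      unfolding Z_def I_def D_def using w xsp[OF w] by (auto simp: indicator_def)
    have "\<And>T. (\<Sum>t<T. if c (xs t \<omega>) \<noteq> h t \<omega> (xs t \<omega>) then 1 else 0) / real T
        = S T \<omega> / real T + (\<Sum>t<T. p t \<omega>) / real T"
      unfolding Ieq S_def by (simp add: sum.distrib add_divide_distrib)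
    moreover have "(\<lambda>T. S T \<omega> / real T + (\<Sum>t<T. p t \<omega>) / real T) \<longlonglongrightarrow> 0"
      using tendsto_add[OF conjunct1[OF h] conjunct2[OF h]] by simp
    ultimately show "(\<lambda>T. (\<Sum>t<T. if c (xs t \<omega>) \<noteq> h t \<omega> (xs t \<omega>) then 1 else 0) / real T) \<longlonglongrightarrow> (0::real)"
      by simp
  qed
qed

end
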